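(* Let $G$ be a reduced simple undirected graph with terminals $s,t$ and maximum degree $\delta$, and let $S$ be a feedback vertex set of $G$ whose size is at most twice the minimum size of a feedback vertex set of $G$. Then $T=S\cup N(S)$ is a tracking set for $G$, and $|T|\le 2(\delta+1)\cdot OPT$, where $OPT$ is the minimum size of a tracking set for $G$.
   Context: An $s$-$t$ path is a simple path from $s$ to $t$. A set $T\subseteq V(G)$ is a tracking set if for any two distinct $s$-$t$ paths $P_1,P_2$, the sequence of vertices of $T\cap V(P_1)$ in the order encountered along $P_1$ differs from the sequence of vertices of $T\cap V(P_2)$ in the order encountered along $P_2$. A graph is reduced if every vertex and every edge lies on at least one $s$-$t$ path. A feedback vertex set is a set of vertices whose removal leaves a forest. $N(S)=\bigcup_{v\in S}N(v)$. *)

theory Defs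
  imports Main
begin

definition simple_graph :: "'a set \<Rightarrow> ('a \<Rightarrow> 'a \<Rightarrow> bool) \<Rightarrow> bool" where
  "simple_graph V E \<longleftrightarrow> finite V \<and> (\<forall>u v. E u v \<longrightarrow> u \<in> V \<and> v \<in> V)
     \<and> (\<forall>u v. E u v \<longrightarrow> E v u) \<and> (\<forall>v. \<not> E v v)"

definition st_path :: "'a set \<Rightarrow> ('a \<Rightarrow> 'a \<Rightarrow> bool) \<Rightarrow> 'a \<Rightarrow> 'a \<Rightarrow> 'a list \<Rightarrow> bool" where
  "st_path V E s t P \<longleftrightarrow> P \<noteq> [] \<and> hd P = s \<and> last P = t \<and> distinct P \<and> set P \<subseteq> V
     \<and> (\<forall>i. Suc i < length P \<longrightarrow> E (P ! i) (P ! Suc i))"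

definition tracking_set :: "'a set \<Rightarrow> ('a \<Rightarrow> 'a \<Rightarrow> bool) \<Rightarrow> 'a \<Rightarrow> 'a \<Rightarrow> 'a set \<Rightarrow> bool" where
  "tracking_set V E s t T \<longleftrightarrow> T \<subseteq> V \<and>
     (\<forall>P1 P2. st_path V E s t P1 \<and> st_path V E s t P2 \<and> P1 \<noteq> P2 \<longrightarrow>
        filter (\<lambda>v. v \<in> T) P1 \<noteq> filter (\<lambda>v. v \<in> T) P2)"

definition reduced :: "'a set \<Rightarrow> ('a \<Rightarrow> 'a \<Rightarrow> bool) \<Rightarrow> 'a \<Rightarrow> 'a \<Rightarrow> bool" where
  "reduced V E s t \<longleftrightarrow>
     (\<forall>v\<in>V. \<exists>P. st_path V E s t P \<and> v \<in> set P) \<and>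
     (\<forall>u v. E u v \<longrightarrow> (\<exists>P. st_path V E s t P \<and>
          (\<exists>i. Suc i < length P \<and> {P ! i, P ! Suc i} = {u, v})))"

definition is_cycle :: "'a set \<Rightarrow> ('a \<Rightarrow> 'a \<Rightarrow> bool) \<Rightarrow> 'a list \<Rightarrow> bool" where
  "is_cycle V E C \<longleftrightarrow> length C \<ge> 3 \<and> distinct C \<and> set C \<subseteq> V
     \<and> (\<forall>i. Suc i < length C \<longrightarrow> E (C ! i) (C ! Suc i)) \<and> E (last C) (hd C)"

text \<open>S is a feedback vertex set iff G - S is a forest, i.e. no cycle avoids S.\<close>
definition feedback_vertex_set :: "'a set \<Rightarrow> ('a \<Rightarrow> 'a \<Rightarrow> bool) \<Rightarrow> 'a set \<Rightarrow> bool" where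
  "feedback_vertex_set V E S \<longleftrightarrow> S \<subseteq> V \<and> (\<forall>C. is_cycle V E C \<longrightarrow> set C \<inter> S \<noteq> {})"

definition nbhd :: "('a \<Rightarrow> 'a \<Rightarrow> bool) \<Rightarrow> 'a set \<Rightarrow> 'a set" where
  "nbhd E S = {u. \<exists>v\<in>S. E v u}"

definition max_degree :: "'a set \<Rightarrow> ('a \<Rightarrow> 'a \<Rightarrow> bool) \<Rightarrow> nat" where
  "max_degree V E = Max ((\<lambda>v. card {u. E v u}) ` V)"

definition min_fvs :: "'a set \<Rightarrow> ('a \<Rightarrow> 'a \<Rightarrow> bool) \<Rightarrow> nat" where
  "min_fvs V E = Min (card ` {S. feedback_vertex_set V E S})"

definition min_tracking :: "'a set \<Rightarrow> ('a \<Rightarrow> 'a \<Rightarrow> bool) \<Rightarrow> 'a \<Rightarrow> 'a \<Rightarrow> nat" where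
  "min_tracking V E s t = Min (card ` {T. tracking_set V E s t T})"

end

theory Submission
  imports Defs
begin

lemma diverge:
  assumes symA: "\<forall>u v. E u v \<longrightarrow> E v u"
    and d1: "distinct (a # R1)" and d2: "distinct (a # R2)"
    and c1: "successively E (a # R1)" and c2: "successively E (a # R2)"
    and ne1: "R1 \<noteq> []" and ne2: "R2 \<noteq> []" and hdne: "hd R1 \<noteq> hd R2"
    and lst: "last R1 = last R2"
  shows "\<exists>C. length C \<ge> 3 \<and> distinct C \<and> set C \<subseteq> set (a # R1) \<union> set (a # R2)
           \<and> successively E C \<and> E (last C) (hd C)"
proof -
  have sym: "\<And>u v. E u v \<Longrightarrow> E v u" using symA by blast
  have "\<exists>v\<in>set R1. v \<in> set R2" using ne1 ne2 lst by (metis last_in_set)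
  then obtain q1 w z1 where R1: "R1 = q1 @ w # z1" and w2: "w \<in> set R2"
    and q1d: "\<forall>v\<in>set q1. v \<notin> set R2"
    using split_list_first_prop[of R1 "\<lambda>v. v \<in> set R2"] by blast
  obtain q2 z2 where R2: "R2 = q2 @ w # z2" using w2 by (meson split_list)
  define C where "C = (a # q1) @ (w # rev q2)"
  have len: "length C \<ge> 3"
  proof (rule ccontr)
    assume "\<not> ?thesis"
    then have "q1 = [] \<and> q2 = []" unfolding C_def by (cases q1; cases q2; auto)
    then show False using hdne R1 R2 by simp
  qed
  have dist: "distinct C" unfolding C_def using d1 d2 q1d R1 R2 by auto
  have sub: "set C \<subseteq> set (a # R1) \<union> set (a # R2)" unfolding C_def using R1 R2 by auto
  have s1: "successively E (a # q1 @ [w])"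
    using c1 unfolding R1 by (simp add: successively_append_iff flip: append_Cons)
  have s2: "successively E (a # q2 @ [w])"
    using c2 unfolding R2 by (simp add: successively_append_iff flip: append_Cons)
  have s2': "successively E (w # rev q2)"
  proof -
    have "successively E (q2 @ [w])" using s2 by (cases "q2 @ [w]") auto
    then have "successively (\<lambda>x y. E y x) (q2 @ [w])"
      by (rule successively_mono) (use sym in blast)
    then have "successively E (rev (q2 @ [w]))" by (simp only: successively_rev)
    moreover have "rev (q2 @ [w]) = w # rev q2" by simp
    ultimately show ?thesis by metis
  qed
  have j: "E (last (a # q1)) w"
    using s1 by (simp add: successively_append_iff flip: append_Cons)
  have sC: "successively E C" unfolding C_def
    using s1 s2' j by (simp add: successively_append_iff flip: append_Cons)
  have lC: "E (last C) (hd C)"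
  proof (cases q2)
    case Nil
    then have "E a w" using s2 by simp
    then show ?thesis unfolding C_def using Nil sym by simp
  next
    case (Cons y ys)
    then have "E a y" using s2 by simp
    then show ?thesis unfolding C_def using Cons sym by simp
  qed
  show ?thesis using len dist sub sC lC by blast
qed

lemma cyc_exists:
  assumes symA: "\<forall>u v. E u v \<longrightarrow> E v u"
  shows "Q1 \<noteq> [] \<Longrightarrow> Q2 \<noteq> [] \<Longrightarrow> distinct Q1 \<Longrightarrow> distinct Q2 \<Longrightarrow>
    successively E Q1 \<Longrightarrow> successively E Q2 \<Longrightarrow> hd Q1 = hd Q2 \<Longrightarrow> last Q1 = last Q2 \<Longrightarrow>
    Q1 \<noteq> Q2 \<Longrightarrow> \<exists>C. length C \<ge> 3 \<and> distinct C \<and> set C \<subseteq> set Q1 \<union> set Q2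
           \<and> successively E C \<and> E (last C) (hd C)"
proof (induction Q1 arbitrary: Q2)
  note sym = symA
  case Nil
  then show ?case by simp
next
  case (Cons a R1)
  obtain R2 where Q2: "Q2 = a # R2" using Cons.prems by (cases Q2) auto
  show ?case
  proof (cases "R1 = [] \<or> R2 = []")
    case True
    then show ?thesis
    proof
      assume "R1 = []"
      then have "R2 = []" using Cons.prems Q2 by (metis last.simps last_in_set distinct.simps(2))
      then show ?thesis using Cons.prems Q2 \<open>R1 = []\<close> by simp
    next
      assume "R2 = []"
      then have "R1 = []" using Cons.prems Q2 by (metis last.simps last_in_set distinct.simps(2))
      then show ?thesis using Cons.prems Q2 \<open>R2 = []\<close> by simp
    qed
  next
    case False
    then have ne: "R1 \<noteq> []" "R2 \<noteq> []" by auto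
    show ?thesis
    proof (cases "hd R1 = hd R2")
      case True
      have "successively E R1" using Cons.prems(5) ne by (simp add: successively_Cons)
      moreover have "successively E R2" using Cons.prems(6) ne Q2 by (simp add: successively_Cons)
      ultimately obtain C where "length C \<ge> 3 \<and> distinct C \<and> set C \<subseteq> set R1 \<union> set R2
           \<and> successively E C \<and> E (last C) (hd C)"
        using Cons.IH[of R2] ne Cons.prems Q2 True by auto
      then show ?thesis using Q2 by auto
    next
      case False
      have "\<exists>C. length C \<ge> 3 \<and> distinct C \<and> set C \<subseteq> set (a # R1) \<union> set (a # R2)
           \<and> successively E C \<and> E (last C) (hd C)"
        by (rule diverge[OF symA]) (use Cons.prems Q2 ne False in auto)
      then show ?thesis using Q2 by simp
    qed
  qed
qed

lemma hd_last_single: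
  assumes "Q \<noteq> []" "distinct Q" "hd Q = last Q" shows "Q = [hd Q]"
proof (cases Q)
  case (Cons x xs)
  show ?thesis
  proof (cases xs)
    case (Cons y ys)
    then have "last Q \<in> set xs" using \<open>Q = x # xs\<close> by simp
    then show ?thesis using assms \<open>Q = x # xs\<close> by simp
  qed (use \<open>Q = x # xs\<close> in simp)
qed (use assms in simp)

lemma hd_S_short:
  assumes "distinct (a # y # R)" "successively E (a # y # R)" "a \<in> S"
    and "\<forall>v\<in>set (a # y # R). v \<in> S \<union> nbhd E S \<longrightarrow> v = a \<or> v = last (a # y # R)"
  shows "R = [] \<and> last (a # y # R) = y"
proof -
  have y: "y \<in> S \<union> nbhd E S" using assms(2,3) unfolding nbhd_def by auto
  have "y \<in> set (a # y # R)" by simp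
  then have "y = a \<or> y = last (a # y # R)" using assms(4) y by blast
  moreover have "y \<noteq> a" using assms(1) by auto
  ultimately have yl: "y = last (y # R)" by simp
  show ?thesis
  proof (cases R)
    case Nil then show ?thesis by simp
  next
    case (Cons r rs)
    then have "last (y # R) \<in> set R" by simp
    then show ?thesis using yl assms(1) by simp
  qed
qed

lemma hdcase:
  assumes "Q1 \<noteq> []" "Q2 \<noteq> []" "distinct Q1" "distinct Q2"
    "successively E Q1" "successively E Q2" "hd Q1 = hd Q2" "last Q1 = last Q2"
    "\<forall>v\<in>set Q1. v \<in> S \<union> nbhd E S \<longrightarrow> v = hd Q1 \<or> v = last Q1"
    "\<forall>v\<in>set Q2. v \<in> S \<union> nbhd E S \<longrightarrow> v = hd Q2 \<or> v = last Q2"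
    "hd Q1 \<in> S"
  shows "Q1 = Q2"
proof (cases "hd Q1 = last Q1")
  case True
  have 1: "Q1 = [hd Q1]" using hd_last_single[OF assms(1,3) True] .
  have "hd Q2 = last Q2" using True assms(7,8) by argo
  then have 2: "Q2 = [hd Q2]" using hd_last_single[OF assms(2,4)] by simp
  show ?thesis using 1 2 assms(7) by (metis)
next
  case False
  obtain a Q1' where q1: "Q1 = a # Q1'" using assms(1) by (cases Q1) auto
  have "Q1' \<noteq> []" using False q1 by auto
  then obtain y R where "Q1' = y # R" by (cases Q1') auto
  with q1 have Q1: "Q1 = a # y # R" by simp
  obtain a' Q2' where q2: "Q2 = a' # Q2'" using assms(2) by (cases Q2) auto
  have "a' = a" using q1 q2 assms(7) by simp
  have "Q2' \<noteq> []" using False q2 q1 assms(7,8) by auto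
  then obtain y' R' where "Q2' = y' # R'" by (cases Q2') auto
  with q2 \<open>a' = a\<close> have Q2: "Q2 = a # y' # R'" by simp
  have aS: "a \<in> S" using assms(11) Q1 by simp
  have r1: "R = [] \<and> last (a # y # R) = y"
    by (rule hd_S_short[of a y R E S]) (use assms(3,5,9) Q1 aS in auto)
  have r2: "R' = [] \<and> last (a # y' # R') = y'"
    by (rule hd_S_short[of a y' R' E S]) (use assms(4,6,10) Q2 aS in auto)
  have "last Q1 = y" "last Q2 = y'" using r1 r2 Q1 Q2 by simp_all
  then have "y = y'" using assms(8) by simp
  then show ?thesis using Q1 Q2 r1 r2 by simp
qed

lemma seg:
  assumes symA: "\<forall>u v. E u v \<longrightarrow> E v u"
    and fvs: "\<And>C. length C \<ge> 3 \<Longrightarrow> distinct C \<Longrightarrow> successively E C \<Longrightarrow> E (last C) (hd C)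
               \<Longrightarrow> set C \<subseteq> V \<Longrightarrow> set C \<inter> S \<noteq> {}"
    and "Q1 \<noteq> []" "Q2 \<noteq> []" "distinct Q1" "distinct Q2"
    "successively E Q1" "successively E Q2" "hd Q1 = hd Q2" "last Q1 = last Q2"
    "set Q1 \<subseteq> V" "set Q2 \<subseteq> V"
    "\<forall>v\<in>set Q1 \<union> set Q2. v \<in> S \<union> nbhd E S \<longrightarrow> v = hd Q1 \<or> v = last Q1"
  shows "Q1 = Q2"
proof (rule ccontr)
  have sym: "\<And>u v. E u v \<Longrightarrow> E v u" using symA by blast
  assume ne: "Q1 \<noteq> Q2"
  obtain C where C: "length C \<ge> 3" "distinct C" "set C \<subseteq> set Q1 \<union> set Q2"
           "successively E C" "E (last C) (hd C)"
    using cyc_exists[OF symA, OF assms(3-10) ne] by blast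
  obtain x where x: "x \<in> set C" "x \<in> S" using fvs[OF C(1,2,4,5)] C(3) assms(11,12) by blast
  have T1: "\<forall>v\<in>set Q1. v \<in> S \<union> nbhd E S \<longrightarrow> v = hd Q1 \<or> v = last Q1" using assms(13) by blast
  have T2: "\<forall>v\<in>set Q2. v \<in> S \<union> nbhd E S \<longrightarrow> v = hd Q2 \<or> v = last Q2" using assms(13,9,10) by auto
  have "x = hd Q1 \<or> x = last Q1" using x C(3) assms(13) by blast
  then show False
  proof
    assume "x = hd Q1"
    then have "Q1 = Q2" using hdcase[OF assms(3-10) T1 T2] x by simp
    then show False using ne by simp
  next
    assume "x = last Q1"
    have sr: "successively E (rev Q)" if "successively E Q" for Q
    proof -
      have "successively (\<lambda>x y. E y x) Q" using that by (rule successively_mono) (use sym in blast)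
      then show ?thesis by simp
    qed
    have "rev Q1 = rev Q2"
      apply (rule hdcase[of "rev Q1" "rev Q2" E S])
      using assms(3-10) T1 T2 x \<open>x = last Q1\<close> sr[OF assms(7)] sr[OF assms(8)]
      by (auto simp: hd_rev last_rev)
    then show False using ne by simp
  qed
qed

lemma succ_app: "successively P (xs @ ys) \<Longrightarrow> successively P xs \<and> successively P ys"
  by (simp add: successively_append_iff)

lemma dist_app: "distinct (xs @ ys) \<Longrightarrow> distinct xs \<and> distinct ys"
  by simp

lemma filt_eq:
  assumes symA: "\<forall>u v. E u v \<longrightarrow> E v u"
    and fvs: "\<And>C. length C \<ge> 3 \<Longrightarrow> distinct C \<Longrightarrow> successively E C \<Longrightarrow> E (last C) (hd C)
               \<Longrightarrow> set C \<subseteq> V \<Longrightarrow> set C \<inter> S \<noteq> {}"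
  shows "Q1 \<noteq> [] \<Longrightarrow> Q2 \<noteq> [] \<Longrightarrow> distinct Q1 \<Longrightarrow> distinct Q2 \<Longrightarrow>
    successively E Q1 \<Longrightarrow> successively E Q2 \<Longrightarrow> hd Q1 = hd Q2 \<Longrightarrow> last Q1 = last Q2 \<Longrightarrow>
    set Q1 \<subseteq> V \<Longrightarrow> set Q2 \<subseteq> V \<Longrightarrow>
    filter (\<lambda>v. v \<in> S \<union> nbhd E S) Q1 = filter (\<lambda>v. v \<in> S \<union> nbhd E S) Q2 \<Longrightarrow> Q1 = Q2"
proof (induction "length Q1" arbitrary: Q1 Q2 rule: less_induct)
  case less
  let ?T = "S \<union> nbhd E S"
  obtain a R1 where Q1: "Q1 = a # R1" using less.prems(1) by (cases Q1) auto
  obtain a' R2 where Q2': "Q2 = a' # R2" using less.prems(2) by (cases Q2) auto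
  have "a' = a" using Q1 Q2' less.prems(7) by simp
  then have Q2: "Q2 = a # R2" using Q2' by simp
  have F: "filter (\<lambda>v. v \<in> ?T) R1 = filter (\<lambda>v. v \<in> ?T) R2"
    using less.prems(11) unfolding Q1 Q2 by (simp split: if_splits)
  show ?case
  proof (cases "filter (\<lambda>v. v \<in> ?T) R1")
    case Nil
    then have n1: "\<forall>v\<in>set R1. v \<notin> ?T" and n2: "\<forall>v\<in>set R2. v \<notin> ?T"
      using F by (simp_all add: filter_empty_conv) (metis (no_types, lifting) filter_empty_conv)
    have "\<forall>v\<in>set Q1 \<union> set Q2. v \<in> ?T \<longrightarrow> v = hd Q1 \<or> v = last Q1"
      using n1 n2 unfolding Q1 Q2 by auto
    then show ?thesis using seg[OF symA fvs] less.prems by blast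
  next
    case (Cons c F')
    obtain A1 B1 where R1: "R1 = A1 @ c # B1" and A1: "\<forall>u\<in>set A1. u \<notin> ?T"
      and cT: "c \<in> ?T" and F1: "F' = filter (\<lambda>v. v \<in> ?T) B1"
      using filter_eq_ConsD[OF Cons] by blast
    obtain A2 B2 where R2: "R2 = A2 @ c # B2" and A2: "\<forall>u\<in>set A2. u \<notin> ?T"
      and F2: "F' = filter (\<lambda>v. v \<in> ?T) B2"
      using filter_eq_ConsD[of _ R2 c F'] Cons F by metis
    have e1: "Q1 = (a # A1 @ [c]) @ B1" "Q1 = (a # A1) @ (c # B1)" using Q1 R1 by simp_all
    have e2: "Q2 = (a # A2 @ [c]) @ B2" "Q2 = (a # A2) @ (c # B2)" using Q2 R2 by simp_all
    have "successively E ((a # A1 @ [c]) @ B1)" "successively E ((a # A1) @ (c # B1))"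
      using less.prems(5) e1 by metis+
    then have sa1: "successively E (a # A1 @ [c])" "successively E (c # B1)"
      using succ_app by blast+
    have "successively E ((a # A2 @ [c]) @ B2)" "successively E ((a # A2) @ (c # B2))"
      using less.prems(6) e2 by metis+
    then have sa2: "successively E (a # A2 @ [c])" "successively E (c # B2)"
      using succ_app by blast+
    have "distinct ((a # A1 @ [c]) @ B1)" "distinct ((a # A1) @ (c # B1))"
      using less.prems(3) e1 by metis+
    then have da1: "distinct (a # A1 @ [c])" "distinct (c # B1)"
      using dist_app by blast+
    have "distinct ((a # A2 @ [c]) @ B2)" "distinct ((a # A2) @ (c # B2))"
      using less.prems(4) e2 by metis+
    then have da2: "distinct (a # A2 @ [c])" "distinct (c # B2)"
      using dist_app by blast+
    have "a # A1 @ [c] = a # A2 @ [c]"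
    proof (rule seg[OF symA fvs])
      show "set (a # A1 @ [c]) \<subseteq> V" "set (a # A2 @ [c]) \<subseteq> V"
        using less.prems(9,10) Q1 Q2 R1 R2 by auto
      show "\<forall>v\<in>set (a # A1 @ [c]) \<union> set (a # A2 @ [c]). v \<in> ?T \<longrightarrow>
              v = hd (a # A1 @ [c]) \<or> v = last (a # A1 @ [c])"
        using A1 A2 by auto
    qed (use sa1 sa2 da1 da2 in auto)
    then have A: "A1 = A2" by simp
    have "c # B1 = c # B2"
    proof (rule less.hyps)
      show "length (c # B1) < length Q1" using Q1 R1 by simp
      show "last (c # B1) = last (c # B2)"
        using less.prems(8) e1(2) e2(2) by (metis last_appendR list.distinct(1))
      show "set (c # B1) \<subseteq> V" "set (c # B2) \<subseteq> V"
        using less.prems(9,10) Q1 Q2 R1 R2 by auto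
      show "filter (\<lambda>v. v \<in> ?T) (c # B1) = filter (\<lambda>v. v \<in> ?T) (c # B2)"
        using cT F1 F2 by simp
    qed (use sa1 sa2 da1 da2 in auto)
    then show ?thesis using Q1 Q2 R1 R2 A by simp
  qed
qed

lemma st_path_alt: "st_path V E s t P \<longleftrightarrow> P \<noteq> [] \<and> hd P = s \<and> last P = t \<and> distinct P
   \<and> set P \<subseteq> V \<and> successively E P"
  by (auto simp: st_path_def successively_conv_nth)

lemma succ_rev_sym:
  assumes "\<forall>u v. E u v \<longrightarrow> E v u" "successively E Q" shows "successively E (rev Q)"
proof -
  have "successively (\<lambda>x y. E y x) Q" using assms(2) by (rule successively_mono) (use assms(1) in blast)
  then show ?thesis by simp
qed

lemma arcs_ord:
  assumes symA: "\<forall>u v. E u v \<longrightarrow> E v u"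
    and C: "C = c1 @ x # c2 @ y # c3" and d: "distinct C" and l: "length C \<ge> 3"
    and sc: "successively E C" and lc: "E (last C) (hd C)"
  shows "\<exists>M1 M2. M1 \<noteq> M2 \<and> distinct (x # M1 @ [y]) \<and> distinct (x # M2 @ [y])
     \<and> successively E (x # M1 @ [y]) \<and> successively E (x # M2 @ [y])
     \<and> set M1 \<subseteq> set C \<and> set M2 \<subseteq> set C"
proof (intro exI conjI)
  show "c2 \<noteq> rev c1 @ rev c3"
  proof
    assume h: "c2 = rev c1 @ rev c3"
    have "set c1 \<inter> set c2 = {}" "set c3 \<inter> set c2 = {}" using d C by auto
    then have "c1 = []" "c3 = []" using h by auto
    then have "c2 = []" using h by simp
    then show False using l C \<open>c1 = []\<close> \<open>c3 = []\<close> by simp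
  qed
  show "distinct (x # c2 @ [y])" using d C by auto
  show "distinct (x # (rev c1 @ rev c3) @ [y])" using d C by auto
  have "successively E (c1 @ ((x # c2 @ [y]) @ c3))" using sc C by simp
  then show "successively E (x # c2 @ [y])" using succ_app by blast
  have s1: "successively E (y # c3)" using sc C
    by (metis append.assoc append_Cons succ_app)
  have s2: "successively E (c1 @ [x])" using sc C
    by (metis append.assoc append_Cons append_Nil succ_app)
  have "last (y # c3) = last C" using C by simp
  moreover have "hd (c1 @ [x]) = hd C" using C by (cases c1) auto
  ultimately have "successively E ((y # c3) @ (c1 @ [x]))"
    using s1 s2 lc by (simp only: successively_append_iff) simp
  then have "successively E (rev ((y # c3) @ (c1 @ [x])))" by (rule succ_rev_sym[OF symA])
  then show "successively E (x # (rev c1 @ rev c3) @ [y])" by simp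
  show "set c2 \<subseteq> set C" "set (rev c1 @ rev c3) \<subseteq> set C" using C by auto
qed

lemma arcs:
  assumes symA: "\<forall>u v. E u v \<longrightarrow> E v u"
    and d: "distinct C" and l: "length C \<ge> 3"
    and sc: "successively E C" and lc: "E (last C) (hd C)"
    and x: "x \<in> set C" and y: "y \<in> set C" and xy: "x \<noteq> y"
  shows "\<exists>M1 M2. M1 \<noteq> M2 \<and> distinct (x # M1 @ [y]) \<and> distinct (x # M2 @ [y])
     \<and> successively E (x # M1 @ [y]) \<and> successively E (x # M2 @ [y])
     \<and> set M1 \<subseteq> set C \<and> set M2 \<subseteq> set C"
proof -
  obtain c1 dd where C: "C = c1 @ x # dd" using x by (meson split_list)
  have "y \<in> set c1 \<or> y \<in> set dd" using y xy C by auto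
  then show ?thesis
  proof
    assume "y \<in> set dd"
    then obtain c2 c3 where "dd = c2 @ y # c3" by (meson split_list)
    then show ?thesis using arcs_ord[OF symA _ d l sc lc, of c1 x c2 y c3] C by simp
  next
    assume "y \<in> set c1"
    then obtain e1 e2 where "c1 = e1 @ y # e2" by (meson split_list)
    then have rC: "rev C = rev dd @ x # rev e2 @ y # rev e1" using C by simp
    have "E (last (rev C)) (hd (rev C))" using lc symA by (simp add: hd_rev last_rev)
    then show ?thesis
      using arcs_ord[OF symA rC _ _ succ_rev_sym[OF symA sc]] d l by simp
  qed
qed

lemma succ_replace:
  "successively E (p1 @ (x # m @ [y]) @ p2) \<Longrightarrow> successively E (x # m' @ [y]) \<Longrightarrow>
   successively E (p1 @ (x # m' @ [y]) @ p2)"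
  by (simp only: successively_append_iff) (auto simp: successively_append_iff)

lemma track_fvs:
  assumes sg: "simple_graph V E" and red: "reduced V E s t" and tr: "tracking_set V E s t T"
  shows "feedback_vertex_set V E T"
  unfolding feedback_vertex_set_def
proof (intro conjI allI impI)
  show "T \<subseteq> V" using tr unfolding tracking_set_def by blast
  have symA: "\<forall>u v. E u v \<longrightarrow> E v u" using sg unfolding simple_graph_def by blast
  fix C assume cyc: "is_cycle V E C"
  show "set C \<inter> T \<noteq> {}"
  proof
    assume dis: "set C \<inter> T = {}"
    have l: "length C \<ge> 3" and d: "distinct C" and CV: "set C \<subseteq> V"
      and sc: "successively E C" and lc: "E (last C) (hd C)"
      using cyc unfolding is_cycle_def successively_conv_nth by auto
    have "E (C!0) (C!1)" using successively_nth[OF sc, of 0] l by simp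
    then obtain P i where P: "st_path V E s t P" and i: "Suc i < length P"
      and pe: "{P ! i, P ! Suc i} = {C ! 0, C ! 1}"
      using red unfolding reduced_def by blast
    have "P ! i \<in> set P" "P ! Suc i \<in> set P" using i by auto
    moreover have "C!0 \<in> {P ! i, P ! Suc i}" "C!1 \<in> {P ! i, P ! Suc i}" using pe by simp_all
    ultimately have u01: "C!0 \<in> set P" "C!1 \<in> set P" by auto
    have u01C: "C!0 \<in> set C" "C!1 \<in> set C"
      using l by (auto intro!: nth_mem)
    have "0 < length C" "1 < length C" using l by auto
    then have u01C3: "C!0 \<noteq> C!1" using nth_eq_iff_index_eq[OF d, of 0 1] by simp
    have Pn: "P \<noteq> []" "hd P = s" "last P = t" "distinct P" "set P \<subseteq> V" "successively E P"
      using P unfolding st_path_alt by auto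
    have "\<exists>v\<in>set P. v \<in> set C" using u01 u01C by blast
    then obtain p1 x r where Pd: "P = p1 @ x # r" and xC: "x \<in> set C"
      and p1C: "\<forall>v\<in>set p1. v \<notin> set C"
      using split_list_first_prop[of P "\<lambda>v. v \<in> set C"] by blast
    obtain u where u: "u \<in> set P" "u \<in> set C" "u \<noteq> x"
      using u01 u01C u01C3 by metis
    have "u \<in> set r" using u Pd p1C by auto
    then have "\<exists>v\<in>set r. v \<in> set C" using u by blast
    then obtain m y p2 where rd: "r = m @ y # p2" and yC: "y \<in> set C"
      and p2C: "\<forall>v\<in>set p2. v \<notin> set C"
      using split_list_last_prop[of r "\<lambda>v. v \<in> set C"] by blast
    have Pd2: "P = p1 @ (x # m @ [y]) @ p2" using Pd rd by simp
    have xy: "x \<noteq> y" using Pn(4) Pd rd by auto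
    obtain M1 M2 where M: "M1 \<noteq> M2" "distinct (x # M1 @ [y])" "distinct (x # M2 @ [y])"
      "successively E (x # M1 @ [y])" "successively E (x # M2 @ [y])"
      "set M1 \<subseteq> set C" "set M2 \<subseteq> set C"
      using arcs[OF symA d l sc lc xC yC xy] by blast
    have gen: "st_path V E s t (p1 @ (x # M @ [y]) @ p2) \<and>
        filter (\<lambda>v. v \<in> T) (p1 @ (x # M @ [y]) @ p2) = filter (\<lambda>v. v \<in> T) p1 @ filter (\<lambda>v. v \<in> T) p2"
      if "distinct (x # M @ [y])" "successively E (x # M @ [y])" "set M \<subseteq> set C" for M
    proof -
      have "hd (p1 @ (x # M @ [y]) @ p2) = hd P" using Pd2 by (cases p1) auto
      moreover have "last (p1 @ (x # M @ [y]) @ p2) = last P" using Pd2 by (cases p2) auto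
      moreover have "distinct (p1 @ (x # M @ [y]) @ p2)"
        using Pn(4) that(1,3) p1C p2C xC yC unfolding Pd2 by auto
      moreover have "set (p1 @ (x # M @ [y]) @ p2) \<subseteq> V"
        using Pn(5) that(3) CV unfolding Pd2 by auto
      moreover have "successively E (p1 @ (x # M @ [y]) @ p2)"
        using succ_replace[of E p1 x m y p2 M] Pn(6) that(2) Pd2 by simp
      moreover have "filter (\<lambda>v. v \<in> T) M = []"
        using dis that(3) by (auto simp: filter_empty_conv)
      moreover have "x \<notin> T" "y \<notin> T" using dis xC yC by auto
      ultimately show ?thesis using Pn unfolding st_path_alt by simp
    qed
    have "st_path V E s t (p1 @ (x # M1 @ [y]) @ p2)" "st_path V E s t (p1 @ (x # M2 @ [y]) @ p2)"
      "filter (\<lambda>v. v \<in> T) (p1 @ (x # M1 @ [y]) @ p2) = filter (\<lambda>v. v \<in> T) (p1 @ (x # M2 @ [y]) @ p2)"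
      using gen[OF M(2,4,6)] gen[OF M(3,5,7)] by auto
    moreover have "p1 @ (x # M1 @ [y]) @ p2 \<noteq> p1 @ (x # M2 @ [y]) @ p2" using M(1) by simp
    ultimately show False using tr unfolding tracking_set_def by blast
  qed
qed

theorem mainTheorem7:
  fixes V :: "'a set" and E :: "'a \<Rightarrow> 'a \<Rightarrow> bool" and s t :: 'a and S :: "'a set"
  assumes "simple_graph V E"
    and "s \<in> V" and "t \<in> V"
    and "reduced V E s t"
    and "feedback_vertex_set V E S"
    and "card S \<le> 2 * min_fvs V E"
  shows "tracking_set V E s t (S \<union> nbhd E S)
    \<and> card (S \<union> nbhd E S) \<le> 2 * (max_degree V E + 1) * min_tracking V E s t"
proof -
  have symA: "\<forall>u v. E u v \<longrightarrow> E v u" and fin: "finite V"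
    and EV: "\<And>u v. E u v \<Longrightarrow> u \<in> V \<and> v \<in> V"
    using assms(1) unfolding simple_graph_def by blast+
  have SV: "S \<subseteq> V" using assms(5) unfolding feedback_vertex_set_def by blast
  have NV: "nbhd E S \<subseteq> V" unfolding nbhd_def using EV by blast
  have fvs: "set C \<inter> S \<noteq> {}" if "length C \<ge> 3" "distinct C" "successively E C" "E (last C) (hd C)"
      "set C \<subseteq> V" for C
  proof -
    have "is_cycle V E C" using that unfolding is_cycle_def successively_conv_nth by blast
    then show ?thesis using assms(5) unfolding feedback_vertex_set_def by blast
  qed
  have track: "tracking_set V E s t (S \<union> nbhd E S)"
    unfolding tracking_set_def
  proof (intro conjI allI impI)
    show "S \<union> nbhd E S \<subseteq> V" using SV NV by blast
    fix P1 P2 assume h: "st_path V E s t P1 \<and> st_path V E s t P2 \<and> P1 \<noteq> P2"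
    show "filter (\<lambda>v. v \<in> S \<union> nbhd E S) P1 \<noteq> filter (\<lambda>v. v \<in> S \<union> nbhd E S) P2"
    proof
      assume f: "filter (\<lambda>v. v \<in> S \<union> nbhd E S) P1 = filter (\<lambda>v. v \<in> S \<union> nbhd E S) P2"
      have "P1 = P2"
        by (rule filt_eq[OF symA fvs]) (use h f in \<open>auto simp: st_path_alt\<close>)
      then show False using h by simp
    qed
  qed
  define \<delta> where "\<delta> = max_degree V E"
  have deg: "card {u. E v u} \<le> \<delta>" if "v \<in> V" for v
    unfolding \<delta>_def max_degree_def using fin that by (intro Max_ge) auto
  have finS: "finite S" using SV fin finite_subset by blast
  have "nbhd E S = (\<Union>v\<in>S. {u. E v u})" unfolding nbhd_def by blast
  then have "card (nbhd E S) \<le> (\<Sum>v\<in>S. card {u. E v u})"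
    using card_UN_le[OF finS] by simp
  also have "\<dots> \<le> card S * \<delta>" using sum_bounded_above[of S "\<lambda>v. card {u. E v u}" \<delta>] deg SV by auto
  finally have cN: "card (nbhd E S) \<le> card S * \<delta>" .
  have "card (S \<union> nbhd E S) \<le> card S + card (nbhd E S)" by (rule card_Un_le)
  also have "\<dots> \<le> (\<delta> + 1) * card S" using cN by (simp add: mult.commute)
  finally have c1: "card (S \<union> nbhd E S) \<le> (\<delta> + 1) * card S" .
  have finT: "finite {T. tracking_set V E s t T}"
    by (rule finite_subset[of _ "Pow V"]) (use fin in \<open>auto simp: tracking_set_def\<close>)
  have "min_tracking V E s t \<in> card ` {T. tracking_set V E s t T}"
    unfolding min_tracking_def using finT track by (intro Min_in) auto
  then obtain T0 where T0: "tracking_set V E s t T0" "card T0 = min_tracking V E s t" by auto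
  have "feedback_vertex_set V E T0" using track_fvs[OF assms(1,4) T0(1)] .
  moreover have "finite {S. feedback_vertex_set V E S}"
    by (rule finite_subset[of _ "Pow V"]) (use fin in \<open>auto simp: feedback_vertex_set_def\<close>)
  ultimately have "min_fvs V E \<le> card T0" unfolding min_fvs_def by (intro Min_le) auto
  then have "card S \<le> 2 * min_tracking V E s t" using assms(6) T0(2) by simp
  then have "(\<delta> + 1) * card S \<le> (\<delta> + 1) * (2 * min_tracking V E s t)"
    by (rule mult_le_mono2)
  then have "card (S \<union> nbhd E S) \<le> 2 * (\<delta> + 1) * min_tracking V E s t" using c1 by (simp add: ac_simps)
  then show ?thesis using track unfolding \<delta>_def by simp
qed

end
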